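(* Let a finitely generated group $\Gamma$ act freely and properly on a locally compact space $X$. Then the Hurder compactification $\tilde X$ is a $\Gamma$-equivariant compactification of $X$ (the action extends continuously) on whose corona $\partial_\Gamma X$ the group $\Gamma$ acts trivially, and it is the maximal such compactification: for every compactification $\bar X$ of $X$ to which the $\Gamma$-action extends continuously and such that every point of $\bar X\setminus X$ is fixed by $\Gamma$, the identity of $X$ extends to a continuous map $\tilde X\to\bar X$.
   Context: Fix a finite symmetric generating set $S$ of $\Gamma$ with word length $\|\cdot\|_S$. For a continuous $f:X\to\mathbb{R}$ and $R>0$, $\Gamma\text{-}var_R(f)(x)=\max\{|f(x)-f(\gamma x)|:\|\gamma\|_S\le R\}$. The Hurder compactification $\tilde X$ is the compactification of $X$ determined by the algebra of bounded continuous functions $f$ on $X$ such that for every $R>0$, $\Gamma\text{-}var_R(f)(x)\to 0$ as $x\to\infty$; its corona is $\partial_\Gamma X=\tilde X\setminus X$. *)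

theory Defs
  imports "HOL-Analysis.Analysis" "HOL-Algebra.Generated_Groups"
begin

definition word_length :: "('g, 'm) monoid_scheme \<Rightarrow> 'g set \<Rightarrow> 'g \<Rightarrow> nat" where
  "word_length G S g =
     (LEAST n. \<exists>ws. length ws = n \<and> set ws \<subseteq> S \<and> foldr (\<otimes>\<^bsub>G\<^esub>) ws \<one>\<^bsub>G\<^esub> = g)"

definition continuous_group_action ::
  "('g, 'm) monoid_scheme \<Rightarrow> 'a topology \<Rightarrow> ('g \<Rightarrow> 'a \<Rightarrow> 'a) \<Rightarrow> bool" where
  "continuous_group_action G X act \<longleftrightarrow>
     (\<forall>g\<in>carrier G. continuous_map X X (act g)) \<and>
     (\<forall>x\<in>topspace X. act \<one>\<^bsub>G\<^esub> x = x) \<and>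
     (\<forall>g\<in>carrier G. \<forall>h\<in>carrier G. \<forall>x\<in>topspace X.
         act (g \<otimes>\<^bsub>G\<^esub> h) x = act g (act h x))"

definition free_action :: "('g, 'm) monoid_scheme \<Rightarrow> 'a topology \<Rightarrow> ('g \<Rightarrow> 'a \<Rightarrow> 'a) \<Rightarrow> bool" where
  "free_action G X act \<longleftrightarrow>
     (\<forall>g\<in>carrier G. \<forall>x\<in>topspace X. act g x = x \<longrightarrow> g = \<one>\<^bsub>G\<^esub>)"

definition proper_action :: "('g, 'm) monoid_scheme \<Rightarrow> 'a topology \<Rightarrow> ('g \<Rightarrow> 'a \<Rightarrow> 'a) \<Rightarrow> bool" where
  "proper_action G X act \<longleftrightarrow>
     (\<forall>K. compactin X K \<longrightarrow> finite {g \<in> carrier G. act g ` K \<inter> K \<noteq> {}})"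

definition gamma_var ::
  "('g, 'm) monoid_scheme \<Rightarrow> 'g set \<Rightarrow> ('g \<Rightarrow> 'a \<Rightarrow> 'a) \<Rightarrow> real \<Rightarrow> ('a \<Rightarrow> real) \<Rightarrow> 'a \<Rightarrow> real" where
  "gamma_var G S act R f x =
     Max {\<bar>f x - f (act g x)\<bar> | g. g \<in> carrier G \<and> real (word_length G S g) \<le> R}"

definition hurder_algebra ::
  "('g, 'm) monoid_scheme \<Rightarrow> 'g set \<Rightarrow> 'a topology \<Rightarrow> ('g \<Rightarrow> 'a \<Rightarrow> 'a) \<Rightarrow> ('a \<Rightarrow> real) set" where
  "hurder_algebra G S X act =
     {f. continuous_map X euclideanreal f \<and>
         (\<exists>B. \<forall>x\<in>topspace X. \<bar>f x\<bar> \<le> B) \<and>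
         (\<forall>R>0. \<forall>e>0. \<exists>K. compactin X K \<and>
             (\<forall>x\<in>topspace X - K. gamma_var G S act R f x < e))}"

definition compactification :: "'a topology \<Rightarrow> 'b topology \<Rightarrow> ('a \<Rightarrow> 'b) \<Rightarrow> bool" where
  "compactification X Y j \<longleftrightarrow>
     compact_space Y \<and> Hausdorff_space Y \<and> embedding_map X Y j \<and>
     Y closure_of (j ` topspace X) = topspace Y"

definition compactification_determined_by ::
  "('a \<Rightarrow> real) set \<Rightarrow> 'a topology \<Rightarrow> 'b topology \<Rightarrow> ('a \<Rightarrow> 'b) \<Rightarrow> bool" where
  "compactification_determined_by A X Y j \<longleftrightarrow>
     compactification X Y j \<and>
     (\<forall>f. f \<in> A \<longleftrightarrow>
          (\<exists>h. continuous_map Y euclideanreal h \<and> (\<forall>x\<in>topspace X. f x = h (j x))))"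

definition hurder_compactification ::
  "('g, 'm) monoid_scheme \<Rightarrow> 'g set \<Rightarrow> 'a topology \<Rightarrow> ('g \<Rightarrow> 'a \<Rightarrow> 'a) \<Rightarrow> 'b topology \<Rightarrow> ('a \<Rightarrow> 'b) \<Rightarrow> bool" where
  "hurder_compactification G S X act Y j \<longleftrightarrow>
     compactification_determined_by (hurder_algebra G S X act) X Y j"

definition extends_action ::
  "('g, 'm) monoid_scheme \<Rightarrow> 'a topology \<Rightarrow> ('g \<Rightarrow> 'a \<Rightarrow> 'a) \<Rightarrow> 'b topology \<Rightarrow> ('a \<Rightarrow> 'b) \<Rightarrow> ('g \<Rightarrow> 'b \<Rightarrow> 'b) \<Rightarrow> bool" where
  "extends_action G X act Y j actY \<longleftrightarrow>
     continuous_group_action G Y actY \<and>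
     (\<forall>g\<in>carrier G. \<forall>x\<in>topspace X. actY g (j x) = j (act g x))"

definition trivial_on_corona ::
  "('g, 'm) monoid_scheme \<Rightarrow> 'a topology \<Rightarrow> 'b topology \<Rightarrow> ('a \<Rightarrow> 'b) \<Rightarrow> ('g \<Rightarrow> 'b \<Rightarrow> 'b) \<Rightarrow> bool" where
  "trivial_on_corona G X Y j actY \<longleftrightarrow>
     (\<forall>g\<in>carrier G. \<forall>y\<in>topspace Y - j ` topspace X. actY g y = y)"

end

theory Submission
  imports Defs
begin

lemma extend_via_functions:
  assumes cY: "compact_space Y"
    and dense: "Y closure_of (j ` topspace X) = topspace Y"
    and jc: "continuous_map X Y j"
    and cZ: "compact_space Z" and HZ: "Hausdorff_space Z"
    and kc: "continuous_map X Z k"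
    and ext: "\<And>\<phi>. continuous_map Z euclideanreal \<phi> \<Longrightarrow>
       (\<exists>\<psi>. continuous_map Y euclideanreal \<psi> \<and> (\<forall>x\<in>topspace X. \<psi> (j x) = \<phi> (k x)))"
  shows "\<exists>h. continuous_map Y Z h \<and> (\<forall>x\<in>topspace X. h (j x) = k x)"
proof -
  define P where "P = prod_topology Y Z"
  define D where "D = (\<lambda>x. (j x, k x)) ` topspace X"
  define \<Gamma> where "\<Gamma> = P closure_of D"
  have DP: "D \<subseteq> topspace P"
    using jc kc unfolding D_def P_def by (auto simp: continuous_map_def)
  have D\<Gamma>: "D \<subseteq> \<Gamma>" unfolding \<Gamma>_def using DP by (rule closure_of_subset)
  have cl\<Gamma>: "closedin P \<Gamma>" unfolding \<Gamma>_def by simp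
  have \<Gamma>P: "\<Gamma> \<subseteq> topspace Y \<times> topspace Z"
    using closure_of_subset_topspace[of P D] unfolding \<Gamma>_def P_def by simp
  have ex: "\<exists>z. (y,z) \<in> \<Gamma>" if "y \<in> topspace Y" for y
  proof -
    have "closedin Y (fst ` \<Gamma>)"
      using closed_map_fst[OF cZ, of Y] cl\<Gamma> unfolding P_def closed_map_def by blast
    moreover have "j ` topspace X \<subseteq> fst ` \<Gamma>"
      using D\<Gamma> unfolding D_def by force
    ultimately have "Y closure_of (j ` topspace X) \<subseteq> fst ` \<Gamma>"
      by (rule closure_of_minimal[rotated])
    then show ?thesis using that dense by force
  qed
  have uniq: "z1 = z2" if "(y,z1) \<in> \<Gamma>" "(y,z2) \<in> \<Gamma>" for y z1 z2
  proof (rule ccontr)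
    assume ne: "z1 \<noteq> z2"
    have z: "z1 \<in> topspace Z" "z2 \<in> topspace Z" using that \<Gamma>P by auto
    have nZ: "normal_space Z"
      using cZ HZ compact_Hausdorff_or_regular_imp_normal_space by blast
    obtain \<phi> where \<phi>: "continuous_map Z euclideanreal \<phi>" "\<phi> ` {z1} \<subseteq> {0}" "\<phi> ` {z2} \<subseteq> {1}"
      using Urysohn_lemma_alt[OF nZ, of "{z1}" "{z2}" 0 1] z HZ ne
      by (metis closedin_Hausdorff_singleton disjnt_insert1 disjnt_empty1 singletonD)
    obtain \<psi> where \<psi>: "continuous_map Y euclideanreal \<psi>" "\<forall>x\<in>topspace X. \<psi> (j x) = \<phi> (k x)"
      using ext[OF \<phi>(1)] by blast
    define E where "E = {p \<in> topspace P. (\<psi> \<circ> fst) p = (\<phi> \<circ> snd) p}"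
    have c1: "continuous_map P euclideanreal (\<psi> \<circ> fst)"
      unfolding P_def by (rule continuous_map_compose[OF continuous_map_fst \<psi>(1)])
    have c2: "continuous_map P euclideanreal (\<phi> \<circ> snd)"
      unfolding P_def by (rule continuous_map_compose[OF continuous_map_snd \<phi>(1)])
    have "closedin P E" unfolding E_def
      by (rule closedin_continuous_maps_eq[OF _ c1 c2]) simp
    moreover have "D \<subseteq> E" using DP \<psi>(2) unfolding D_def E_def by auto
    ultimately have "\<Gamma> \<subseteq> E" unfolding \<Gamma>_def by (rule closure_of_minimal[rotated])
    then have "\<psi> y = \<phi> z1" "\<psi> y = \<phi> z2" using that unfolding E_def by auto
    then show False using \<phi> by auto
  qed
  define h where "h y = (SOME z. (y,z) \<in> \<Gamma>)" for y
  have h\<Gamma>: "(y, h y) \<in> \<Gamma>" if "y \<in> topspace Y" for y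
    unfolding h_def using ex[OF that] by (rule someI_ex)
  have hj: "h (j x) = k x" if "x \<in> topspace X" for x
  proof -
    have "(j x, k x) \<in> \<Gamma>" using D\<Gamma> that unfolding D_def by auto
    moreover have "j x \<in> topspace Y" using jc that by (auto simp: continuous_map_def)
    ultimately show ?thesis using uniq h\<Gamma> by blast
  qed
  have "continuous_map Y Z h"
    unfolding continuous_map_closedin
  proof (intro conjI allI impI)
    show "h \<in> topspace Y \<rightarrow> topspace Z" using h\<Gamma> \<Gamma>P by auto
    fix C assume C: "closedin Z C"
    have eq: "{y \<in> topspace Y. h y \<in> C} = fst ` (\<Gamma> \<inter> (topspace Y \<times> C))"
    proof (intro equalityI subsetI)
      fix y assume "y \<in> {y \<in> topspace Y. h y \<in> C}"
      then show "y \<in> fst ` (\<Gamma> \<inter> (topspace Y \<times> C))"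
        using h\<Gamma> by (auto intro!: image_eqI[where x="(y, h y)"])
    next
      fix y assume "y \<in> fst ` (\<Gamma> \<inter> (topspace Y \<times> C))"
      then obtain z where "(y,z) \<in> \<Gamma>" "z \<in> C" "y \<in> topspace Y" by auto
      then show "y \<in> {y \<in> topspace Y. h y \<in> C}" using uniq h\<Gamma> by blast
    qed
    have "closedin P (\<Gamma> \<inter> (topspace Y \<times> C))"
      using cl\<Gamma> C unfolding P_def
      by (intro closedin_Int) (auto simp: closedin_prod_Times_iff)
    then show "closedin Y {y \<in> topspace Y. h y \<in> C}"
      unfolding eq using closed_map_fst[OF cZ, of Y] unfolding P_def closed_map_def by blast
  qed
  then show ?thesis using hj by blast
qed

lemma foldr_carrier:
  assumes "group G" "S \<subseteq> carrier G" "set ws \<subseteq> S"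
  shows "foldr (\<otimes>\<^bsub>G\<^esub>) ws \<one>\<^bsub>G\<^esub> \<in> carrier G"
  using assms(3)
proof (induction ws)
  case Nil then show ?case using assms(1) by (simp add: group.is_monoid monoid.one_closed)
next
  case (Cons a ws) then show ?case using assms(1,2) by (auto intro: monoid.m_closed group.is_monoid)
qed

lemma foldr_mult:
  assumes "group G" "S \<subseteq> carrier G" "set ws \<subseteq> S" "b \<in> carrier G"
  shows "foldr (\<otimes>\<^bsub>G\<^esub>) ws b = foldr (\<otimes>\<^bsub>G\<^esub>) ws \<one>\<^bsub>G\<^esub> \<otimes>\<^bsub>G\<^esub> b"
  using assms(3)
proof (induction ws)
  case Nil then show ?case using assms by (simp add: group.is_monoid monoid.l_one)
next
  case (Cons a ws)
  have "a \<in> carrier G" using Cons.prems assms(2) by auto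
  moreover have "foldr (\<otimes>\<^bsub>G\<^esub>) ws \<one>\<^bsub>G\<^esub> \<in> carrier G"
    using foldr_carrier[OF assms(1,2)] Cons.prems by auto
  ultimately show ?case using Cons assms(1,4) by (simp add: group.is_monoid monoid.m_assoc)
qed

lemma foldr_append_mult:
  assumes "group G" "S \<subseteq> carrier G" "set ws \<subseteq> S" "set vs \<subseteq> S"
  shows "foldr (\<otimes>\<^bsub>G\<^esub>) (ws @ vs) \<one>\<^bsub>G\<^esub> =
     foldr (\<otimes>\<^bsub>G\<^esub>) ws \<one>\<^bsub>G\<^esub> \<otimes>\<^bsub>G\<^esub> foldr (\<otimes>\<^bsub>G\<^esub>) vs \<one>\<^bsub>G\<^esub>"
  using foldr_mult[OF assms(1,2,3) foldr_carrier[OF assms(1,2,4)]] by simp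

lemma has_word:
  assumes "group G" "S \<subseteq> carrier G" "\<forall>s\<in>S. inv\<^bsub>G\<^esub> s \<in> S" "g \<in> generate G S"
  shows "\<exists>ws. set ws \<subseteq> S \<and> foldr (\<otimes>\<^bsub>G\<^esub>) ws \<one>\<^bsub>G\<^esub> = g"
  using assms(4)
proof (induction rule: generate.induct)
  case one then show ?case by (intro exI[of _ "[]"]) simp
next
  case (incl h) then show ?case using assms(1,2)
    by (intro exI[of _ "[h]"]) (auto simp: group.is_monoid monoid.r_one)
next
  case (inv h) then show ?case using assms(1,2,3)
    by (intro exI[of _ "[inv\<^bsub>G\<^esub> h]"]) (auto simp: group.is_monoid monoid.r_one group.inv_closed)
next
  case (eng h1 h2)
  then obtain ws vs where "set ws \<subseteq> S" "foldr (\<otimes>\<^bsub>G\<^esub>) ws \<one>\<^bsub>G\<^esub> = h1"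
     "set vs \<subseteq> S" "foldr (\<otimes>\<^bsub>G\<^esub>) vs \<one>\<^bsub>G\<^esub> = h2" by blast
  then show ?case using foldr_append_mult[OF assms(1,2)]
    by (intro exI[of _ "ws @ vs"]) auto
qed

lemma embedding_cont: "embedding_map X Y j \<Longrightarrow> continuous_map X Y j"
  unfolding embedding_map_def
  using homeomorphic_imp_continuous_map continuous_map_in_subtopology by blast

lemma dense_unique:
  assumes "continuous_map Y Z f" "continuous_map Y Z g" "Hausdorff_space Z"
    and "Y closure_of D = topspace Y" and "\<And>y. y \<in> D \<Longrightarrow> f y = g y" and "D \<subseteq> topspace Y"
    and "y \<in> topspace Y"
  shows "f y = g y"
proof -
  have "closedin Y {y \<in> topspace Y. f y = g y}"
    using closedin_continuous_maps_eq assms(1-3) by blast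
  moreover have "D \<subseteq> {y \<in> topspace Y. f y = g y}" using assms(5,6) by auto
  ultimately have "Y closure_of D \<subseteq> {y \<in> topspace Y. f y = g y}"
    by (rule closure_of_minimal[rotated])
  then show ?thesis using assms(4,7) by auto
qed

lemma sep_points:
  assumes "compact_space Y" "Hausdorff_space Y" "a \<in> topspace Y" "b \<in> topspace Y" "a \<noteq> b"
  obtains \<phi> where "continuous_map Y euclideanreal \<phi>" "\<phi> a = 0" "\<phi> b = 1"
proof -
  have nY: "normal_space Y"
    using assms compact_Hausdorff_or_regular_imp_normal_space by blast
  obtain \<phi> where \<phi>: "continuous_map Y euclideanreal \<phi>" "\<phi> ` {a} \<subseteq> {0}" "\<phi> ` {b} \<subseteq> {1}"
    using Urysohn_lemma_alt[OF nY, of "{a}" "{b}" 0 1] assms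
    by (metis closedin_Hausdorff_singleton disjnt_insert1 disjnt_empty1 singletonD)
  then show ?thesis using that by auto
qed

locale wl_setup =
  fixes G :: "('g, 'm) monoid_scheme" and S :: "'g set"
  assumes grp: "group G" and finS: "finite S" and SG: "S \<subseteq> carrier G"
    and sym: "\<forall>s\<in>S. inv\<^bsub>G\<^esub> s \<in> S" and gen: "generate G S = carrier G"
begin

lemma wl_attained:
  assumes "g \<in> carrier G"
  shows "\<exists>ws. length ws = word_length G S g \<and> set ws \<subseteq> S \<and> foldr (\<otimes>\<^bsub>G\<^esub>) ws \<one>\<^bsub>G\<^esub> = g"
proof -
  obtain ws where "set ws \<subseteq> S \<and> foldr (\<otimes>\<^bsub>G\<^esub>) ws \<one>\<^bsub>G\<^esub> = g"
    using has_word[OF grp SG sym] assms gen by blast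
  then have "\<exists>n ws. length ws = n \<and> set ws \<subseteq> S \<and> foldr (\<otimes>\<^bsub>G\<^esub>) ws \<one>\<^bsub>G\<^esub> = g" by blast
  then show ?thesis unfolding word_length_def by (rule LeastI_ex)
qed

lemma wl_le:
  assumes "set ws \<subseteq> S" "foldr (\<otimes>\<^bsub>G\<^esub>) ws \<one>\<^bsub>G\<^esub> = g"
  shows "word_length G S g \<le> length ws"
  unfolding word_length_def using assms by (intro Least_le) blast

lemma wl_one: "word_length G S \<one>\<^bsub>G\<^esub> = 0"
  using wl_le[of "[]"] by simp

lemma wl_mult:
  assumes "g \<in> carrier G" "h \<in> carrier G"
  shows "word_length G S (g \<otimes>\<^bsub>G\<^esub> h) \<le> word_length G S g + word_length G S h"
proof -
  obtain ws vs where "length ws = word_length G S g" "set ws \<subseteq> S" "foldr (\<otimes>\<^bsub>G\<^esub>) ws \<one>\<^bsub>G\<^esub> = g"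
    "length vs = word_length G S h" "set vs \<subseteq> S" "foldr (\<otimes>\<^bsub>G\<^esub>) vs \<one>\<^bsub>G\<^esub> = h"
    using wl_attained assms by metis
  then show ?thesis using wl_le[of "ws @ vs"] foldr_append_mult[OF grp SG] by fastforce
qed

definition ball_set :: "real \<Rightarrow> 'g set" where
  "ball_set R = {g \<in> carrier G. real (word_length G S g) \<le> R}"

lemma finite_ball_set: "finite (ball_set R)"
proof -
  have "ball_set R \<subseteq> (\<lambda>ws. foldr (\<otimes>\<^bsub>G\<^esub>) ws \<one>\<^bsub>G\<^esub>) ` {ws. set ws \<subseteq> S \<and> length ws \<le> nat \<lfloor>R\<rfloor>}"
  proof
    fix g assume g: "g \<in> ball_set R"
    then obtain ws where "length ws = word_length G S g" "set ws \<subseteq> S" "foldr (\<otimes>\<^bsub>G\<^esub>) ws \<one>\<^bsub>G\<^esub> = g"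
      using wl_attained unfolding ball_set_def by blast
    moreover have "length ws \<le> nat \<lfloor>R\<rfloor>" using g calculation(1) unfolding ball_set_def
      by (simp add: le_nat_floor)
    ultimately show "g \<in> (\<lambda>ws. foldr (\<otimes>\<^bsub>G\<^esub>) ws \<one>\<^bsub>G\<^esub>) ` {ws. set ws \<subseteq> S \<and> length ws \<le> nat \<lfloor>R\<rfloor>}"
      by auto
  qed
  then show ?thesis using finite_lists_length_le[OF finS] finite_subset by blast
qed

lemma one_ball_set: "R \<ge> 0 \<Longrightarrow> \<one>\<^bsub>G\<^esub> \<in> ball_set R"
  unfolding ball_set_def using wl_one grp by (simp add: group.is_monoid monoid.one_closed)

lemma gamma_var_eq: "gamma_var G S act R f x = Max ((\<lambda>g. \<bar>f x - f (act g x)\<bar>) ` ball_set R)"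
  unfolding gamma_var_def ball_set_def by (rule arg_cong[where f=Max]) auto

lemma gv_ge: "g \<in> ball_set R \<Longrightarrow> \<bar>f x - f (act g x)\<bar> \<le> gamma_var G S act R f x"
  unfolding gamma_var_eq using finite_ball_set by (intro Max_ge) auto

lemma gv_lt: "R \<ge> 0 \<Longrightarrow> (\<And>g. g \<in> ball_set R \<Longrightarrow> \<bar>f x - f (act g x)\<bar> < e) \<Longrightarrow> gamma_var G S act R f x < e"
  unfolding gamma_var_eq using finite_ball_set one_ball_set
  by (subst Max_less_iff) auto

lemma hurder_invariant:
  assumes act: "continuous_group_action G X act" and f: "f \<in> hurder_algebra G S X act"
    and g: "g \<in> carrier G"
  shows "(\<lambda>x. f (act g x)) \<in> hurder_algebra G S X act"
proof -
  interpret G: group G by (rule grp)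
  have actc: "continuous_map X X (act g')" if "g' \<in> carrier G" for g'
    using act that unfolding continuous_group_action_def by blast
  have act1: "act \<one>\<^bsub>G\<^esub> x = x" if "x \<in> topspace X" for x
    using act that unfolding continuous_group_action_def by blast
  have actm: "act (a \<otimes>\<^bsub>G\<^esub> b) x = act a (act b x)" if "a \<in> carrier G" "b \<in> carrier G" "x \<in> topspace X" for a b x
    using act that unfolding continuous_group_action_def by blast
  have acts: "act g' x \<in> topspace X" if "g' \<in> carrier G" "x \<in> topspace X" for g' x
    using actc[OF that(1)] that(2) by (auto simp: continuous_map_def)
  have ig: "inv\<^bsub>G\<^esub> g \<in> carrier G" using grp g by simp
  from f have fc: "continuous_map X euclideanreal f" and fb: "\<exists>B. \<forall>x\<in>topspace X. \<bar>f x\<bar> \<le> B"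
    and fv: "\<forall>R>0. \<forall>e>0. \<exists>K. compactin X K \<and> (\<forall>x\<in>topspace X - K. gamma_var G S act R f x < e)"
    unfolding hurder_algebra_def by auto
  have "continuous_map X euclideanreal (\<lambda>x. f (act g x))"
    using continuous_map_compose[OF actc[OF g] fc] by (simp add: o_def)
  moreover have "\<exists>B. \<forall>x\<in>topspace X. \<bar>f (act g x)\<bar> \<le> B"
    using fb acts[OF g] by blast
  moreover have "\<exists>K. compactin X K \<and> (\<forall>x\<in>topspace X - K. gamma_var G S act R (\<lambda>x. f (act g x)) x < e)"
    if R: "R > 0" and e: "e > 0" for R e
  proof -
    define R' where "R' = R + real (word_length G S g) + real (word_length G S (inv\<^bsub>G\<^esub> g))"
    have "R' > 0" using R unfolding R'_def by simp
    then obtain K where K: "compactin X K" "\<forall>x\<in>topspace X - K. gamma_var G S act R' f x < e"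
      using fv e by blast
    define K' where "K' = act (inv\<^bsub>G\<^esub> g) ` K"
    have "compactin X K'" unfolding K'_def using image_compactin[OF K(1) actc[OF ig]] .
    moreover have "gamma_var G S act R (\<lambda>x. f (act g x)) x < e" if x: "x \<in> topspace X - K'" for x
    proof (rule gv_lt)
      show "R \<ge> 0" using R by simp
      have xX: "x \<in> topspace X" using x by simp
      have gx: "act g x \<in> topspace X" using acts[OF g xX] .
      have "act (inv\<^bsub>G\<^esub> g) (act g x) = x"
        using actm[OF ig g xX] act1[OF xX] g by simp
      then have "act g x \<notin> K" using x unfolding K'_def by force
      then have lt: "gamma_var G S act R' f (act g x) < e" using K(2) gx by blast
      fix \<gamma> assume \<gamma>: "\<gamma> \<in> ball_set R"
      have \<gamma>G: "\<gamma> \<in> carrier G" using \<gamma> unfolding ball_set_def by simp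
      define \<gamma>' where "\<gamma>' = g \<otimes>\<^bsub>G\<^esub> \<gamma> \<otimes>\<^bsub>G\<^esub> inv\<^bsub>G\<^esub> g"
      have \<gamma>'G: "\<gamma>' \<in> carrier G" unfolding \<gamma>'_def using grp g \<gamma>G by simp
      have "word_length G S \<gamma>' \<le> word_length G S (g \<otimes>\<^bsub>G\<^esub> \<gamma>) + word_length G S (inv\<^bsub>G\<^esub> g)"
        unfolding \<gamma>'_def using wl_mult grp g \<gamma>G ig by simp
      also have "\<dots> \<le> word_length G S g + word_length G S \<gamma> + word_length G S (inv\<^bsub>G\<^esub> g)"
        using wl_mult[OF g \<gamma>G] by simp
      finally have "real (word_length G S \<gamma>') \<le> R'"
        using \<gamma> unfolding R'_def ball_set_def by simp
      then have \<gamma>'b: "\<gamma>' \<in> ball_set R'" using \<gamma>'G unfolding ball_set_def by simp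
      have "act \<gamma>' (act g x) = act (\<gamma>' \<otimes>\<^bsub>G\<^esub> g) x" using actm[OF \<gamma>'G g xX] by simp
      also have "\<gamma>' \<otimes>\<^bsub>G\<^esub> g = g \<otimes>\<^bsub>G\<^esub> \<gamma>"
        unfolding \<gamma>'_def using g \<gamma>G by (simp add: G.m_assoc)
      also have "act (g \<otimes>\<^bsub>G\<^esub> \<gamma>) x = act g (act \<gamma> x)" using actm[OF g \<gamma>G xX] .
      finally have "\<bar>f (act g x) - f (act g (act \<gamma> x))\<bar> = \<bar>f (act g x) - f (act \<gamma>' (act g x))\<bar>" by simp
      also have "\<dots> \<le> gamma_var G S act R' f (act g x)" by (rule gv_ge[OF \<gamma>'b])
      finally show "\<bar>f (act g x) - f (act g (act \<gamma> x))\<bar> < e" using lt by simp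
    qed
    ultimately show ?thesis by blast
  qed
  ultimately show ?thesis unfolding hurder_algebra_def by blast
qed

lemma corona_in_hurder:
  assumes cZ: "compactification X Z k" and ext: "extends_action G X act Z k actZ"
    and triv: "trivial_on_corona G X Z k actZ" and \<phi>: "continuous_map Z euclideanreal \<phi>"
  shows "(\<lambda>x. \<phi> (k x)) \<in> hurder_algebra G S X act"
proof -
  have compZ: "compact_space Z" and emb: "embedding_map X Z k" using cZ unfolding compactification_def by auto
  have kc: "continuous_map X Z k" using embedding_cont[OF emb] .
  have actZc: "continuous_map Z Z (actZ g)" if "g \<in> carrier G" for g
    using ext that unfolding extends_action_def continuous_group_action_def by blast
  have actZk: "actZ g (k x) = k (act g x)" if "g \<in> carrier G" "x \<in> topspace X" for g x
    using ext that unfolding extends_action_def by blast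
  have "continuous_map X euclideanreal (\<lambda>x. \<phi> (k x))"
    using continuous_map_compose[OF kc \<phi>] by (simp add: o_def)
  moreover have "\<exists>B. \<forall>x\<in>topspace X. \<bar>\<phi> (k x)\<bar> \<le> B"
  proof -
    have "compactin euclideanreal (\<phi> ` topspace Z)"
      using image_compactin[OF _ \<phi>] compZ unfolding compact_space_def by blast
    then have "bounded (\<phi> ` topspace Z)" using compact_imp_bounded by auto
    then obtain B where "\<forall>z\<in>topspace Z. \<bar>\<phi> z\<bar> \<le> B" unfolding bounded_real by auto
    moreover have "k x \<in> topspace Z" if "x \<in> topspace X" for x using kc that by (auto simp: continuous_map_def)
    ultimately show ?thesis by blast
  qed
  moreover have "\<exists>K. compactin X K \<and> (\<forall>x\<in>topspace X - K. gamma_var G S act R (\<lambda>x. \<phi> (k x)) x < e)"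
    if R: "R > 0" and e: "e > 0" for R e
  proof -
    define C where "C = (\<Union>\<gamma>\<in>ball_set R. {z \<in> topspace Z. \<bar>\<phi> z - \<phi> (actZ \<gamma> z)\<bar> \<in> {e..}})"
    have "closedin Z C" unfolding C_def
    proof (rule closedin_Union)
      show "finite ((\<lambda>\<gamma>. {z \<in> topspace Z. \<bar>\<phi> z - \<phi> (actZ \<gamma> z)\<bar> \<in> {e..}}) ` ball_set R)"
        using finite_ball_set by simp
      fix T assume "T \<in> (\<lambda>\<gamma>. {z \<in> topspace Z. \<bar>\<phi> z - \<phi> (actZ \<gamma> z)\<bar> \<in> {e..}}) ` ball_set R"
      then obtain \<gamma> where \<gamma>: "\<gamma> \<in> carrier G" and T: "T = {z \<in> topspace Z. \<bar>\<phi> z - \<phi> (actZ \<gamma> z)\<bar> \<in> {e..}}"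
        unfolding ball_set_def by auto
      have "continuous_map Z euclideanreal (\<lambda>z. \<bar>\<phi> z - \<phi> (actZ \<gamma> z)\<bar>)"
        using continuous_map_compose[OF actZc[OF \<gamma>] \<phi>] \<phi>
        by (intro continuous_intros) (auto simp: o_def)
      then show "closedin Z T" unfolding T
        by (rule closedin_continuous_map_preimage) auto
    qed
    then have Cc: "compactin Z C" using compZ closedin_compact_space by blast
    have Ck: "C \<subseteq> k ` topspace X"
    proof
      fix z assume "z \<in> C"
      then obtain \<gamma> where \<gamma>: "\<gamma> \<in> carrier G" and z: "z \<in> topspace Z" "\<bar>\<phi> z - \<phi> (actZ \<gamma> z)\<bar> \<ge> e"
        unfolding C_def ball_set_def by auto
      show "z \<in> k ` topspace X"
      proof (rule ccontr)
        assume "z \<notin> k ` topspace X"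
        then have "actZ \<gamma> z = z" using triv \<gamma> z unfolding trivial_on_corona_def by blast
        then show False using z e by simp
      qed
    qed
    define K where "K = {x \<in> topspace X. k x \<in> C}"
    have kK: "k ` K = C" using Ck unfolding K_def by auto
    have "compactin (subtopology Z (k ` topspace X)) (k ` K)"
      unfolding kK compactin_subtopology using Cc Ck by simp
    then have Kc: "compactin X K"
      using homeomorphic_map_compactness[of X "subtopology Z (k ` topspace X)" k K] emb
      unfolding embedding_map_def K_def by auto
    moreover have "gamma_var G S act R (\<lambda>x. \<phi> (k x)) x < e" if x: "x \<in> topspace X - K" for x
    proof (rule gv_lt)
      show "R \<ge> 0" using R by simp
      fix \<gamma> assume \<gamma>: "\<gamma> \<in> ball_set R"
      have \<gamma>G: "\<gamma> \<in> carrier G" using \<gamma> unfolding ball_set_def by simp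
      have "k x \<notin> C" "k x \<in> topspace Z" using x kc unfolding K_def by (auto simp: continuous_map_def)
      then have "\<bar>\<phi> (k x) - \<phi> (actZ \<gamma> (k x))\<bar> < e" using \<gamma> unfolding C_def by force
      then show "\<bar>\<phi> (k x) - \<phi> (k (act \<gamma> x))\<bar> < e" using actZk[OF \<gamma>G] x by simp
    qed
    ultimately show ?thesis by blast
  qed
  ultimately show ?thesis unfolding hurder_algebra_def by blast
qed

lemma hurder_trivial:
  assumes cY: "compactification X Y j" and ext: "extends_action G X act Y j actY"
    and A: "\<And>\<phi>. continuous_map Y euclideanreal \<phi> \<Longrightarrow> (\<lambda>x. \<phi> (j x)) \<in> hurder_algebra G S X act"
  shows "trivial_on_corona G X Y j actY"
  unfolding trivial_on_corona_def
proof (intro ballI)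
  fix g y assume g: "g \<in> carrier G" and y: "y \<in> topspace Y - j ` topspace X"
  have compY: "compact_space Y" and HY: "Hausdorff_space Y" and emb: "embedding_map X Y j"
    and dense: "Y closure_of (j ` topspace X) = topspace Y"
    using cY unfolding compactification_def by auto
  have jc: "continuous_map X Y j" using embedding_cont[OF emb] .
  have actYc: "continuous_map Y Y (actY g)"
    using ext g unfolding extends_action_def continuous_group_action_def by blast
  have actYj: "actY g (j x) = j (act g x)" if "x \<in> topspace X" for x
    using ext that g unfolding extends_action_def by blast
  show "actY g y = y"
  proof (rule ccontr)
    assume ne: "actY g y \<noteq> y"
    have yY: "y \<in> topspace Y" using y by simp
    have gyY: "actY g y \<in> topspace Y" using actYc yY by (auto simp: continuous_map_def)
    obtain \<phi> where \<phi>: "continuous_map Y euclideanreal \<phi>" "\<phi> y = 0" "\<phi> (actY g y) = 1"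
      using sep_points[OF compY HY yY gyY] ne by metis
    have fA: "(\<lambda>x. \<phi> (j x)) \<in> hurder_algebra G S X act" using A[OF \<phi>(1)] .
    define R where "R = real (word_length G S g) + 1"
    have gb: "g \<in> ball_set R" using g unfolding R_def ball_set_def by simp
    obtain K where K: "compactin X K" "\<forall>x\<in>topspace X - K. gamma_var G S act R (\<lambda>x. \<phi> (j x)) x < 1/2"
    proof -
      have fv: "\<forall>R>0. \<forall>e>0. \<exists>K. compactin X K \<and> (\<forall>x\<in>topspace X - K. gamma_var G S act R (\<lambda>x. \<phi> (j x)) x < e)"
        using fA unfolding hurder_algebra_def by auto
      have "R > 0" unfolding R_def by simp
      then show ?thesis using fv[rule_format, of R "1/2"] that by auto
    qed
    have ps: "continuous_map Y euclideanreal (\<lambda>z. \<bar>\<phi> z - \<phi> (actY g z)\<bar>)"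
      using continuous_map_compose[OF actYc \<phi>(1)] \<phi>(1)
      by (intro continuous_intros) (auto simp: o_def)
    define U where "U = {z \<in> topspace Y. \<bar>\<phi> z - \<phi> (actY g z)\<bar> \<in> {1/2<..}}"
    have Uo: "openin Y U" unfolding U_def by (rule openin_continuous_map_preimage[OF ps]) auto
    have jK: "closedin Y (j ` K)"
      using compactin_imp_closedin[OF HY image_compactin[OF K(1) jc]] .
    have "openin Y (U - j ` K)" using Uo jK by (rule openin_diff)
    moreover have "y \<in> U - j ` K"
      using y \<phi> compactin_subset_topspace[OF K(1)] unfolding U_def by auto
    ultimately have "j ` topspace X \<inter> (U - j ` K) \<noteq> {}"
      using dense unfolding dense_intersects_open by blast
    then obtain x where x: "x \<in> topspace X" "j x \<in> U" "j x \<notin> j ` K" by auto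
    then have "x \<in> topspace X - K" by auto
    then have "gamma_var G S act R (\<lambda>x. \<phi> (j x)) x < 1/2" using K(2) by blast
    moreover have "\<bar>\<phi> (j x) - \<phi> (j (act g x))\<bar> \<le> gamma_var G S act R (\<lambda>x. \<phi> (j x)) x"
      using gv_ge[OF gb, of "\<lambda>x. \<phi> (j x)" x act] by simp
    moreover have "\<bar>\<phi> (j x) - \<phi> (j (act g x))\<bar> > 1/2" using x(2) actYj[OF x(1)] unfolding U_def by simp
    ultimately show False by simp
  qed
qed

end


theorem proposition4:
  fixes G :: "('g, 'm) monoid_scheme" and S :: "'g set"
    and X :: "'a topology" and act :: "'g \<Rightarrow> 'a \<Rightarrow> 'a"
    and Y :: "'b topology" and j :: "'a \<Rightarrow> 'b"
  assumes "group G"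
    and "finite S" and "S \<subseteq> carrier G" and "\<forall>s\<in>S. inv\<^bsub>G\<^esub> s \<in> S"
    and "generate G S = carrier G"
    and "Hausdorff_space X" and "locally_compact_space X"
    and "continuous_group_action G X act"
    and "free_action G X act" and "proper_action G X act"
    and "hurder_compactification G S X act Y j"
  shows "(\<exists>actY. extends_action G X act Y j actY \<and> trivial_on_corona G X Y j actY)
    \<and> (\<forall>(Z :: 'c topology) k actZ.
          compactification X Z k \<and> extends_action G X act Z k actZ \<and>
          trivial_on_corona G X Z k actZ \<longrightarrow>
          (\<exists>h. continuous_map Y Z h \<and> (\<forall>x\<in>topspace X. h (j x) = k x)))"
proof -
  interpret W: wl_setup G S using assms(1-5) by (simp add: wl_setup_def)
  interpret G: group G by (rule assms(1))
  have cY: "compactification X Y j"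
    and det: "\<And>f. f \<in> hurder_algebra G S X act \<longleftrightarrow>
          (\<exists>h. continuous_map Y euclideanreal h \<and> (\<forall>x\<in>topspace X. f x = h (j x)))"
    using assms(11) unfolding hurder_compactification_def compactification_determined_by_def by auto
  have compY: "compact_space Y" and HY: "Hausdorff_space Y" and emb: "embedding_map X Y j"
    and dense: "Y closure_of (j ` topspace X) = topspace Y"
    using cY unfolding compactification_def by auto
  have jc: "continuous_map X Y j" using embedding_cont[OF emb] .
  have jX: "j ` topspace X \<subseteq> topspace Y" using jc by (auto simp: continuous_map_def)
  have A1: "(\<lambda>x. \<phi> (j x)) \<in> hurder_algebra G S X act" if "continuous_map Y euclideanreal \<phi>" for \<phi>
    using det that by blast
  have actc: "continuous_map X X (act g)" if "g \<in> carrier G" for g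
    using assms(8) that unfolding continuous_group_action_def by blast
  have act1: "act \<one>\<^bsub>G\<^esub> x = x" if "x \<in> topspace X" for x
    using assms(8) that unfolding continuous_group_action_def by blast
  have actm: "act (a \<otimes>\<^bsub>G\<^esub> b) x = act a (act b x)" if "a \<in> carrier G" "b \<in> carrier G" "x \<in> topspace X" for a b x
    using assms(8) that unfolding continuous_group_action_def by blast
  have acts: "act g' x \<in> topspace X" if "g' \<in> carrier G" "x \<in> topspace X" for g' x
    using actc[OF that(1)] that(2) by (auto simp: continuous_map_def)
  define actY where "actY g = (SOME h. continuous_map Y Y h \<and> (\<forall>x\<in>topspace X. h (j x) = j (act g x)))" for g
  have exh: "\<exists>h. continuous_map Y Y h \<and> (\<forall>x\<in>topspace X. h (j x) = j (act g x))" if g: "g \<in> carrier G" for g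
  proof (rule extend_via_functions[OF compY dense jc compY HY])
    show "continuous_map X Y (\<lambda>x. j (act g x))"
      using continuous_map_compose[OF actc[OF g] jc] by (simp add: o_def)
    fix \<phi> assume \<phi>: "continuous_map Y euclideanreal \<phi>"
    have "(\<lambda>x. (\<lambda>x. \<phi> (j x)) (act g x)) \<in> hurder_algebra G S X act"
      by (rule W.hurder_invariant[OF assms(8) A1[OF \<phi>] g])
    then obtain \<psi> where "continuous_map Y euclideanreal \<psi>" "\<forall>x\<in>topspace X. \<phi> (j (act g x)) = \<psi> (j x)"
      using det by auto
    then show "\<exists>\<psi>. continuous_map Y euclideanreal \<psi> \<and> (\<forall>x\<in>topspace X. \<psi> (j x) = \<phi> (j (act g x)))"
      by auto
  qed
  have actYp: "continuous_map Y Y (actY g) \<and> (\<forall>x\<in>topspace X. actY g (j x) = j (act g x))"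
    if g: "g \<in> carrier G" for g
    unfolding actY_def using exh[OF g] by (rule someI_ex)
  have ext: "extends_action G X act Y j actY"
    unfolding extends_action_def continuous_group_action_def
  proof (intro conjI ballI)
    fix g assume g: "g \<in> carrier G"
    show "continuous_map Y Y (actY g)" using actYp[OF g] by blast
    fix x assume "x \<in> topspace X"
    then show "actY g (j x) = j (act g x)" using actYp[OF g] by blast
  next
    fix y assume y: "y \<in> topspace Y"
    show "actY \<one>\<^bsub>G\<^esub> y = y"
    proof (rule dense_unique[OF _ continuous_map_id HY dense _ jX y, simplified])
      show "continuous_map Y Y (actY \<one>\<^bsub>G\<^esub>)" using actYp[of "\<one>\<^bsub>G\<^esub>"] by simp
      fix z assume "z \<in> j ` topspace X"
      then obtain x where "x \<in> topspace X" "z = j x" by auto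
      then show "actY \<one>\<^bsub>G\<^esub> z = z" using actYp[of "\<one>\<^bsub>G\<^esub>"] act1 by simp
    qed
  next
    fix g h y assume g: "g \<in> carrier G" and h: "h \<in> carrier G" and y: "y \<in> topspace Y"
    show "actY (g \<otimes>\<^bsub>G\<^esub> h) y = actY g (actY h y)"
    proof (rule dense_unique[OF _ _ HY dense _ jX y, where g="actY g \<circ> actY h", simplified])
      show "continuous_map Y Y (actY (g \<otimes>\<^bsub>G\<^esub> h))" using actYp[of "g \<otimes>\<^bsub>G\<^esub> h"] g h by simp
      show "continuous_map Y Y (actY g \<circ> actY h)"
        using continuous_map_compose actYp[OF g] actYp[OF h] by blast
      fix z assume "z \<in> j ` topspace X"
      then obtain x where x: "x \<in> topspace X" "z = j x" by auto
      then show "actY (g \<otimes>\<^bsub>G\<^esub> h) z = actY g (actY h z)"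
        using actYp[of "g \<otimes>\<^bsub>G\<^esub> h"] actYp[OF g] actYp[OF h] g h actm acts by simp
    qed
  qed
  have triv: "trivial_on_corona G X Y j actY"
    by (rule W.hurder_trivial[OF cY ext A1])
  have part2: "\<exists>h. continuous_map Y Z h \<and> (\<forall>x\<in>topspace X. h (j x) = k x)"
    if cZ: "compactification X Z k" and extZ: "extends_action G X act Z k actZ"
      and trivZ: "trivial_on_corona G X Z k actZ" for Z :: "'c topology" and k actZ
  proof -
    have compZ: "compact_space Z" and HZ: "Hausdorff_space Z" and embZ: "embedding_map X Z k"
      using cZ unfolding compactification_def by auto
    show ?thesis
    proof (rule extend_via_functions[OF compY dense jc compZ HZ embedding_cont[OF embZ]])
      fix \<phi> assume \<phi>: "continuous_map Z euclideanreal \<phi>"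
      have "(\<lambda>x. \<phi> (k x)) \<in> hurder_algebra G S X act"
        by (rule W.corona_in_hurder[OF cZ extZ trivZ \<phi>])
      then obtain \<psi> where "continuous_map Y euclideanreal \<psi>" "\<forall>x\<in>topspace X. \<phi> (k x) = \<psi> (j x)"
        using det by auto
      then show "\<exists>\<psi>. continuous_map Y euclideanreal \<psi> \<and> (\<forall>x\<in>topspace X. \<psi> (j x) = \<phi> (k x))"
        by auto
    qed
  qed
  show ?thesis using ext triv part2 by blast
qed

end
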